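(* Let $X^n$ be a sequence of processes converging locally to a process $X$ in the Skorokhod topology under a continuous test function $f:\cdot\to[0,\infty]$, and assume that $X$ has continuous paths and does not have finite-time explosion. Then for any $r,t>0$, $$\limsup_{n}\mathbb P\big(\tau_r^{(n)}\le t\big)\le \mathbb P(\tau_r\le t),$$ and consequently $\lim_{r\to\infty}\limsup_n\mathbb P(\tau_r^{(n)}\le t)=0$.
   Context: For $r>0$ set $\tau_r^{(n)}=\inf\{t\ge0: f(X^n_t)\ge r\}$ and $\tau_r=\inf\{t\ge0: f(X_t)\ge r\}$. "$X^n$ converges locally to $X$ in the Skorokhod topology under $f$" means: for every $r>0$, the stopped processes satisfy $X^n_{t\wedge\tau^{(n)}_r}\Rightarrow X_{t\wedge\tau_r}$ in distribution in the Skorokhod topology. $X$ "does not have finite-time explosion" means $\mathbb P(\lim_{r\to\infty}\tau_r=\infty)=1$. *)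

theory Defs
  imports "HOL-Probability.Probability"
begin

text \<open>Paths are functions real => 'e; only times t >= 0 are relevant.\<close>

definition cadlag :: "(real \<Rightarrow> 'e::metric_space) \<Rightarrow> bool" where
  "cadlag x \<longleftrightarrow> (\<forall>t\<ge>0. continuous (at_right t) x \<and> (t > 0 \<longrightarrow> (\<exists>l. (x \<longlongrightarrow> l) (at_left t))))"

text \<open>Convergence in the Skorokhod J1 topology on D_E[0,infinity)
  (Ethier--Kurtz, Prop. 3.5.3): there are strictly increasing continuous
  bijections lambda_n of [0,infinity) such that for each T > 0,
  sup_{t <= T} |lambda_n t - t| -> 0 and sup_{t <= T} d(x_n t, x(lambda_n t)) -> 0.\<close>

definition time_change :: "(real \<Rightarrow> real) \<Rightarrow> bool" where
  "time_change l \<longleftrightarrow> strict_mono_on {0..} l \<and> continuous_on {0..} l \<and> l ` {0..} = {0..}"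

definition skorokhod_conv :: "(nat \<Rightarrow> real \<Rightarrow> 'e::metric_space) \<Rightarrow> (real \<Rightarrow> 'e) \<Rightarrow> bool" where
  "skorokhod_conv xs x \<longleftrightarrow>
     (\<exists>l :: nat \<Rightarrow> real \<Rightarrow> real. (\<forall>n. time_change (l n)) \<and>
        (\<forall>T>0. \<forall>e>0. eventually (\<lambda>n. \<forall>t\<in>{0..T}. \<bar>l n t - t\<bar> < e
                                       \<and> dist (xs n t) (x (l n t)) < e) sequentially))"

text \<open>Continuity w.r.t. the (metrizable) Skorokhod topology, as sequential continuity on D_E[0,infinity).\<close>
definition skorokhod_continuous :: "((real \<Rightarrow> 'e::metric_space) \<Rightarrow> real) \<Rightarrow> bool" where
  "skorokhod_continuous g \<longleftrightarrow>
     (\<forall>xs x. (\<forall>n. cadlag (xs n)) \<and> cadlag x \<and> skorokhod_conv xs x \<longrightarrow> (\<lambda>n. g (xs n)) \<longlonglongrightarrow> g x)"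

definition skorokhod_conv_distr ::
  "(nat \<Rightarrow> 'a measure) \<Rightarrow> (nat \<Rightarrow> 'a \<Rightarrow> real \<Rightarrow> 'e::metric_space) \<Rightarrow> 'b measure \<Rightarrow> ('b \<Rightarrow> real \<Rightarrow> 'e) \<Rightarrow> bool" where
  "skorokhod_conv_distr M Xs N Y \<longleftrightarrow>
     (\<forall>g. skorokhod_continuous g \<and> bounded (range g) \<longrightarrow>
        (\<lambda>n. \<integral>\<omega>. g (Xs n \<omega>) \<partial>M n) \<longlonglongrightarrow> (\<integral>\<omega>. g (Y \<omega>) \<partial>N))"

text \<open>tau_r = inf{t >= 0 : f(x t) >= r}, with inf {} = infinity.\<close>
definition hit_time :: "('e \<Rightarrow> ennreal) \<Rightarrow> real \<Rightarrow> (real \<Rightarrow> 'e) \<Rightarrow> ennreal" where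
  "hit_time f r x = (INF t\<in>{t. t \<ge> 0 \<and> ennreal r \<le> f (x t)}. ennreal t)"

definition stopped :: "('e \<Rightarrow> ennreal) \<Rightarrow> real \<Rightarrow> (real \<Rightarrow> 'e) \<Rightarrow> real \<Rightarrow> 'e" where
  "stopped f r x t = x (if hit_time f r x < ennreal t then enn2real (hit_time f r x) else t)"

end

theory Submission
  imports Defs
begin

definition GG :: "(real \<Rightarrow> real) \<Rightarrow> ('e::metric_space \<Rightarrow> real) \<Rightarrow> (real \<Rightarrow> 'e) \<Rightarrow> real" where
  "GG \<psi> h x = (SUP s\<in>{0..}. \<psi> s * h (x s))"

definition good :: "(real \<Rightarrow> real) \<Rightarrow> ('e::metric_space \<Rightarrow> real) \<Rightarrow> real \<Rightarrow> bool" where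
  "good \<psi> h T0 \<longleftrightarrow> continuous_on UNIV \<psi> \<and> continuous_on UNIV h \<and> (\<forall>s. 0 \<le> \<psi> s \<and> \<psi> s \<le> 1)
     \<and> (\<forall>y. 0 \<le> h y \<and> h y \<le> 1) \<and> (\<forall>s\<ge>T0. \<psi> s = 0) \<and> T0 \<ge> 0"

lemma GG_bdd: assumes "good \<psi> h T0" shows "bdd_above ((\<lambda>s. \<psi> s * h (x s)) ` {0..})"
proof -
  have "\<psi> s * h (x s) \<le> 1" for s using assms unfolding good_def by (simp add: mult_le_one)
  then show ?thesis by (intro bdd_aboveI[of _ 1]) auto
qed

lemma GG_upper: assumes "good \<psi> h T0" "s \<ge> 0" shows "\<psi> s * h (x s) \<le> GG \<psi> h x"
  unfolding GG_def by (rule cSUP_upper[OF _ GG_bdd[OF assms(1)]]) (use assms in auto)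

lemma GG_le: assumes "\<And>s. s \<ge> 0 \<Longrightarrow> \<psi> s * h (x s) \<le> B" shows "GG \<psi> h x \<le> B"
  unfolding GG_def by (rule cSUP_least) (use assms in auto)

lemma GG_nonneg: assumes "good \<psi> h T0" shows "0 \<le> GG \<psi> h x"
proof -
  have "0 \<le> \<psi> 0 * h (x 0)" using assms unfolding good_def by simp
  also have "\<dots> \<le> GG \<psi> h x" by (rule GG_upper[OF assms]) simp
  finally show ?thesis .
qed

lemma GG_le1: assumes "good \<psi> h T0" shows "GG \<psi> h x \<le> 1"
  using assms unfolding good_def by (intro GG_le) (simp add: mult_le_one)

lemma GG_pos_iff: assumes "good \<psi> h T0"
  shows "0 < GG \<psi> h x \<longleftrightarrow> (\<exists>s\<ge>0. 0 < \<psi> s \<and> 0 < h (x s))"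
proof
  assume "0 < GG \<psi> h x"
  then obtain s where "s \<ge> 0" "0 < \<psi> s * h (x s)"
    unfolding GG_def using less_cSUP_iff[OF _ GG_bdd[OF assms]] by fastforce
  then show "\<exists>s\<ge>0. 0 < \<psi> s \<and> 0 < h (x s)" using assms unfolding good_def
    by (metis less_eq_real_def mult_eq_0_iff)
next
  assume "\<exists>s\<ge>0. 0 < \<psi> s \<and> 0 < h (x s)"
  then obtain s where "s \<ge> 0" "0 < \<psi> s * h (x s)" by auto
  then show "0 < GG \<psi> h x" using GG_upper[OF assms, of s x] by linarith
qed

lemma cont_eps: assumes "continuous_on UNIV g" "e > 0"
  shows "\<exists>d>0. \<forall>y. dist y y0 < d \<longrightarrow> dist (g y) (g y0) < e"
  using assms unfolding continuous_on_iff by (metis UNIV_I)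

lemma F_cont: assumes "good \<psi> h T0" "e > 0"
  shows "\<exists>d>0. \<forall>s y. \<bar>s - s0\<bar> < d \<longrightarrow> dist y y0 < d \<longrightarrow> \<bar>\<psi> s * h y - \<psi> s0 * h y0\<bar> < e"
proof -
  from assms have c: "continuous_on UNIV \<psi>" "continuous_on UNIV h" unfolding good_def by auto
  obtain d1 where d1: "d1 > 0" "\<forall>s. dist s s0 < d1 \<longrightarrow> dist (\<psi> s) (\<psi> s0) < e/2"
    using cont_eps[OF c(1), of "e/2" s0] assms by auto
  obtain d2 where d2: "d2 > 0" "\<forall>y. dist y y0 < d2 \<longrightarrow> dist (h y) (h y0) < e/2"
    using cont_eps[OF c(2), of "e/2" y0] assms by auto
  show ?thesis
  proof (intro exI[of _ "min d1 d2"] conjI allI impI)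
    fix s y assume "\<bar>s - s0\<bar> < min d1 d2" "dist y y0 < min d1 d2"
    then have a: "\<bar>\<psi> s - \<psi> s0\<bar> < e/2" "\<bar>h y - h y0\<bar> < e/2" using d1 d2 by (auto simp: dist_real_def)
    have b: "\<bar>h y\<bar> \<le> 1" "\<bar>\<psi> s0\<bar> \<le> 1" using assms(1) unfolding good_def by auto
    have "\<psi> s * h y - \<psi> s0 * h y0 = (\<psi> s - \<psi> s0) * h y + \<psi> s0 * (h y - h y0)" by algebra
    also have "\<bar>\<dots>\<bar> \<le> \<bar>\<psi> s - \<psi> s0\<bar> * \<bar>h y\<bar> + \<bar>\<psi> s0\<bar> * \<bar>h y - h y0\<bar>"
      by (metis abs_mult abs_triangle_ineq)
    also have "\<dots> \<le> \<bar>\<psi> s - \<psi> s0\<bar> + \<bar>h y - h y0\<bar>"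
      using b by (intro add_mono; simp add: mult_left_le mult_left_le_one_le)
    finally show "\<bar>\<psi> s * h y - \<psi> s0 * h y0\<bar> < e" using a by linarith
  qed (use d1 d2 in auto)
qed

lemma local_upper:
  assumes g: "good \<psi> h T0" and x: "cadlag x" and s0: "s0 \<ge> 0" and e: "e > 0"
  shows "\<exists>d>0. \<forall>s u y. \<bar>s - s0\<bar> < d \<longrightarrow> u \<ge> 0 \<longrightarrow> \<bar>u - s0\<bar> < d \<longrightarrow> dist y (x u) < d
            \<longrightarrow> \<psi> s * h y < GG \<psi> h x + e"
proof -
  have rc: "(x \<longlongrightarrow> x s0) (at_right s0)" using x s0 unfolding cadlag_def continuous_within by auto
  obtain \<rho> where \<rho>: "\<rho> > 0" "\<forall>s y. \<bar>s - s0\<bar> < \<rho> \<longrightarrow> dist y (x s0) < \<rho> \<longrightarrow> \<bar>\<psi> s * h y - \<psi> s0 * h (x s0)\<bar> < e/2"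
    using F_cont[OF g, of "e/2" s0 "x s0"] e by auto
  have "eventually (\<lambda>u. dist (x u) (x s0) < \<rho>/2) (at_right s0)"
    using rc \<rho>(1) by (intro tendstoD) auto
  then obtain b where b: "b > s0" "\<forall>u>s0. u < b \<longrightarrow> dist (x u) (x s0) < \<rho>/2"
    unfolding eventually_at_right_field by auto
  have Fs0: "\<psi> s0 * h (x s0) \<le> GG \<psi> h x" using GG_upper[OF g s0] .
  have right: "\<psi> s * h y < GG \<psi> h x + e/2" if "\<bar>s - s0\<bar> < \<rho>" "s0 \<le> u" "u < b" "dist y (x u) < \<rho>/2" for s u y
  proof -
    have "dist (x u) (x s0) < \<rho>/2" using b that by (cases "u = s0") auto
    then have "dist y (x s0) < \<rho>" using that dist_triangle[of y "x s0" "x u"] by linarith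
    then have "\<bar>\<psi> s * h y - \<psi> s0 * h (x s0)\<bar> < e/2" using \<rho>(2) that(1) by blast
    then show ?thesis using Fs0 by linarith
  qed
  show ?thesis
  proof (cases "s0 = 0")
    case True
    show ?thesis
    proof (rule exI[of _ "min (\<rho>/2) (b - s0)"], intro conjI allI impI)
      fix s u y assume h: "\<bar>s - s0\<bar> < min (\<rho>/2) (b - s0)" "0 \<le> u" "\<bar>u - s0\<bar> < min (\<rho>/2) (b - s0)"
        "dist y (x u) < min (\<rho>/2) (b - s0)"
      then have "\<psi> s * h y < GG \<psi> h x + e/2" using True by (intro right) (auto simp: abs_less_iff)
      then show "\<psi> s * h y < GG \<psi> h x + e" using e by linarith
    qed (use \<rho> b in auto)
  next
    case False
    then have s0p: "s0 > 0" using s0 by auto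
    then obtain L where L: "(x \<longlongrightarrow> L) (at_left s0)" using x s0p unfolding cadlag_def by (meson less_imp_le)
    obtain \<rho>2 where \<rho>2: "\<rho>2 > 0" "\<forall>s y. \<bar>s - s0\<bar> < \<rho>2 \<longrightarrow> dist y L < \<rho>2 \<longrightarrow> \<bar>\<psi> s * h y - \<psi> s0 * h L\<bar> < e/2"
      using F_cont[OF g, of "e/2" s0 L] e by auto
    have "eventually (\<lambda>u. dist (x u) L < \<rho>2/2) (at_left s0)"
      using L \<rho>2(1) by (intro tendstoD) auto
    then obtain a where a: "a < s0" "\<forall>u>a. u < s0 \<longrightarrow> dist (x u) L < \<rho>2/2"
      unfolding eventually_at_left_field by auto
    define u0 where "u0 = (max (max a (s0 - \<rho>2)) 0 + s0) / 2"
    have u0: "u0 \<ge> 0" "a < u0" "u0 < s0" "\<bar>u0 - s0\<bar> < \<rho>2" using s0p a \<rho>2 unfolding u0_def by auto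
    have "\<bar>\<psi> u0 * h (x u0) - \<psi> s0 * h L\<bar> < e/2" using \<rho>2 u0 a by auto
    moreover have "\<psi> u0 * h (x u0) \<le> GG \<psi> h x" using GG_upper[OF g u0(1)] .
    ultimately have FL: "\<psi> s0 * h L < GG \<psi> h x + e/2" by linarith
    have left: "\<psi> s * h y < GG \<psi> h x + e" if "\<bar>s - s0\<bar> < \<rho>2" "a < u" "u < s0" "dist y (x u) < \<rho>2/2" for s u y
    proof -
      have "dist (x u) L < \<rho>2/2" using a that by auto
      then have "dist y L < \<rho>2" using that dist_triangle[of y L "x u"] by linarith
      then have "\<bar>\<psi> s * h y - \<psi> s0 * h L\<bar> < e/2" using \<rho>2(2) that(1) by blast
      then show ?thesis using FL by linarith
    qed
    show ?thesis
    proof (rule exI[of _ "min (min (\<rho>/2) (b - s0)) (min (\<rho>2/2) (s0 - a))"], intro conjI allI impI)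
      fix s u y assume h: "\<bar>s - s0\<bar> < min (min (\<rho>/2) (b - s0)) (min (\<rho>2/2) (s0 - a))" "0 \<le> u"
        "\<bar>u - s0\<bar> < min (min (\<rho>/2) (b - s0)) (min (\<rho>2/2) (s0 - a))"
        "dist y (x u) < min (min (\<rho>/2) (b - s0)) (min (\<rho>2/2) (s0 - a))"
      show "\<psi> s * h y < GG \<psi> h x + e"
      proof (cases "s0 \<le> u")
        case True
        have "\<bar>s - s0\<bar> < \<rho>" "u < b" "dist y (x u) < \<rho>/2" using h \<rho>(1) by auto
        then have "\<psi> s * h y < GG \<psi> h x + e/2" using True by (intro right) auto
        then show ?thesis using e by linarith
      next
        case False
        have "\<bar>s - s0\<bar> < \<rho>2" "a < u" "dist y (x u) < \<rho>2/2" using h \<rho>2(1) by auto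
        then show ?thesis using False by (intro left) auto
      qed
    qed (use \<rho> b \<rho>2 a in auto)
  qed
qed

lemma global_upper:
  assumes g: "good \<psi> h T0" and x: "cadlag x" and e: "e > 0"
  shows "\<exists>d>0. \<forall>s\<in>{0..T0}. \<forall>u y. u \<ge> 0 \<longrightarrow> \<bar>u - s\<bar> < d \<longrightarrow> dist y (x u) < d
            \<longrightarrow> \<psi> s * h y < GG \<psi> h x + e"
proof -
  have "\<forall>s0\<in>{0..T0}. \<exists>d>0. \<forall>s u y. \<bar>s - s0\<bar> < d \<longrightarrow> u \<ge> 0 \<longrightarrow> \<bar>u - s0\<bar> < d \<longrightarrow> dist y (x u) < d
            \<longrightarrow> \<psi> s * h y < GG \<psi> h x + e"
    using local_upper[OF g x _ e] by auto
  then obtain D where D: "\<And>s0. s0 \<in> {0..T0} \<Longrightarrow> D s0 > 0 \<and> (\<forall>s u y. \<bar>s - s0\<bar> < D s0 \<longrightarrow> u \<ge> 0 \<longrightarrow> \<bar>u - s0\<bar> < D s0 \<longrightarrow> dist y (x u) < D s0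
            \<longrightarrow> \<psi> s * h y < GG \<psi> h x + e)"
    by metis
  have "{0..T0} \<subseteq> (\<Union>c\<in>{0..T0}. ball c (D c / 2))"
    using D by force
  then obtain C where C: "C \<subseteq> {0..T0}" "finite C" "{0..T0} \<subseteq> (\<Union>c\<in>C. ball c (D c / 2))"
    using compactE_image[of "{0..T0}" "{0..T0}" "\<lambda>c. ball c (D c / 2)"] by auto
  have T0: "T0 \<ge> 0" using g unfolding good_def by auto
  then have "C \<noteq> {}" using C(3) by auto
  define d where "d = Min ((\<lambda>c. D c / 2) ` C)"
  have dpos: "d > 0" unfolding d_def using C D \<open>C \<noteq> {}\<close> by (subst Min_gr_iff) auto
  have dle: "d \<le> D c / 2" if "c \<in> C" for c unfolding d_def using Min_le[of "(\<lambda>c. D c / 2) ` C" "D c / 2"] C that by auto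
  show ?thesis
  proof (intro exI[of _ d] conjI ballI allI impI dpos)
    fix s u y assume s: "s \<in> {0..T0}" and u: "u \<ge> 0" "\<bar>u - s\<bar> < d" "dist y (x u) < d"
    then obtain c where c: "c \<in> C" "s \<in> ball c (D c / 2)" using C by auto
    have Dc: "D c > 0" using D[of c] c(1) C(1) by auto
    have sc: "\<bar>s - c\<bar> < D c / 2" using c(2) by (simp add: dist_real_def abs_minus_commute)
    have "\<bar>s - c\<bar> < D c" "\<bar>u - c\<bar> < D c" "dist y (x u) < D c"
      using sc dle[OF c(1)] u Dc by arith+
    then show "\<psi> s * h y < GG \<psi> h x + e" using D[of c] c C(1) u by blast
  qed
qed

lemma GG_cont:
  assumes g: "good \<psi> h T0" and x: "cadlag x" and conv: "skorokhod_conv xs x"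
  shows "(\<lambda>n. GG \<psi> h (xs n)) \<longlonglongrightarrow> GG \<psi> h x"
proof -
  from conv obtain l where l: "\<And>n. time_change (l n)"
    "\<And>T e. T > 0 \<Longrightarrow> e > 0 \<Longrightarrow> eventually (\<lambda>n. \<forall>t\<in>{0..T}. \<bar>l n t - t\<bar> < e
                                       \<and> dist (xs n t) (x (l n t)) < e) sequentially"
    unfolding skorokhod_conv_def by blast
  have T0: "T0 \<ge> 0" using g unfolding good_def by auto
  have psi0: "\<psi> s = 0" if "s \<ge> T0" for s using g that unfolding good_def by auto
  show ?thesis
  proof (rule order_tendstoI)
    fix a assume a: "a > GG \<psi> h x"
    obtain d where d: "d > 0" "\<forall>s\<in>{0..T0}. \<forall>u y. u \<ge> 0 \<longrightarrow> \<bar>u - s\<bar> < d \<longrightarrow> dist y (x u) < d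
            \<longrightarrow> \<psi> s * h y < GG \<psi> h x + (a - GG \<psi> h x)/2"
      using global_upper[OF g x, of "(a - GG \<psi> h x)/2"] a by auto
    have "eventually (\<lambda>n. \<forall>t\<in>{0..T0+1}. \<bar>l n t - t\<bar> < d \<and> dist (xs n t) (x (l n t)) < d) sequentially"
      using l(2)[of "T0 + 1" d, OF _ d(1)] T0 by auto
    then show "eventually (\<lambda>n. GG \<psi> h (xs n) < a) sequentially"
    proof (eventually_elim)
      case (elim n)
      have "GG \<psi> h (xs n) \<le> GG \<psi> h x + (a - GG \<psi> h x)/2"
      proof (rule GG_le)
        fix s :: real assume s: "s \<ge> 0"
        show "\<psi> s * h (xs n s) \<le> GG \<psi> h x + (a - GG \<psi> h x)/2"
        proof (cases "s \<le> T0")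
          case True
          have "l n s \<in> l n ` {0..}" using s by auto
          then have lns: "l n s \<ge> 0" using l(1)[of n] unfolding time_change_def by auto
          have "\<bar>l n s - s\<bar> < d" "dist (xs n s) (x (l n s)) < d" using elim s True by auto
          then show ?thesis using d(2) True s lns by fastforce
        next
          case False
          then show ?thesis using psi0[of s] GG_nonneg[OF g, of x] a by simp
        qed
      qed
      then show ?case using a by (simp add: field_simps)
    qed
  next
    fix a assume a: "a < GG \<psi> h x"
    show "eventually (\<lambda>n. a < GG \<psi> h (xs n)) sequentially"
    proof (cases "a < 0")
      case True
      then show ?thesis using GG_nonneg[OF g] by (intro always_eventually) (meson less_le_trans)
    next
      case False
      obtain u where u: "u \<ge> 0" "a < \<psi> u * h (x u)"
        using a less_cSUP_iff[OF _ GG_bdd[OF g], of a] unfolding GG_def by auto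
      have "u < T0" using psi0[of u] u False by (cases "u < T0") auto
      obtain \<rho> where \<rho>: "\<rho> > 0" "\<forall>s y. \<bar>s - u\<bar> < \<rho> \<longrightarrow> dist y (x u) < \<rho> \<longrightarrow> \<bar>\<psi> s * h y - \<psi> u * h (x u)\<bar> < \<psi> u * h (x u) - a"
        using F_cont[OF g, of "\<psi> u * h (x u) - a" u "x u"] u by auto
      have "eventually (\<lambda>n. \<forall>t\<in>{0..T0+1}. \<bar>l n t - t\<bar> < min \<rho> 1 \<and> dist (xs n t) (x (l n t)) < min \<rho> 1) sequentially"
        using T0 \<rho>(1) by (intro l(2)) auto
      then show ?thesis
      proof (eventually_elim)
        case (elim n)
        have "u \<in> l n ` {0..}" using l(1)[of n] u unfolding time_change_def by auto
        then obtain s where s: "s \<ge> 0" "l n s = u" by auto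
        have sT: "s \<le> T0 + 1"
        proof (rule ccontr)
          assume "\<not> s \<le> T0 + 1"
          then have "l n (T0 + 1) < l n s" using l(1)[of n] T0 unfolding time_change_def
            by (auto intro: strict_mono_onD)
          moreover have "\<bar>l n (T0 + 1) - (T0 + 1)\<bar> < 1" using elim T0 by auto
          ultimately show False using s \<open>u < T0\<close> by auto
        qed
        have "\<bar>s - u\<bar> < \<rho>" "dist (xs n s) (x u) < \<rho>" using elim s sT by (auto simp: abs_minus_commute)
        then have "\<bar>\<psi> s * h (xs n s) - \<psi> u * h (x u)\<bar> < \<psi> u * h (x u) - a" using \<rho>(2) by blast
        then have "a < \<psi> s * h (xs n s)" by linarith
        also have "\<dots> \<le> GG \<psi> h (xs n)" by (rule GG_upper[OF g s(1)])
        finally show ?case .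
      qed
    qed
  qed
qed

lemma hit_le: "s \<ge> 0 \<Longrightarrow> ennreal r \<le> f (x s) \<Longrightarrow> hit_time f r x \<le> ennreal s"
  unfolding hit_time_def by (rule INF_lower) auto

lemma hit_attained:
  fixes x :: "real \<Rightarrow> 'e::metric_space"
  assumes rc: "\<forall>s\<ge>0. continuous (at_right s) x" and contf: "continuous_on UNIV f"
    and fin: "hit_time f r x \<noteq> \<infinity>"
  shows "0 \<le> enn2real (hit_time f r x)" "ennreal (enn2real (hit_time f r x)) = hit_time f r x"
    "ennreal r \<le> f (x (enn2real (hit_time f r x)))"
proof -
  define \<sigma> where "\<sigma> = enn2real (hit_time f r x)"
  show "0 \<le> enn2real (hit_time f r x)" by simp
  show e: "ennreal (enn2real (hit_time f r x)) = hit_time f r x" using fin by (simp add: less_top)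
  have s0: "\<sigma> \<ge> 0" unfolding \<sigma>_def by simp
  show "ennreal r \<le> f (x (enn2real (hit_time f r x)))"
  proof (rule ccontr)
    assume "\<not> ennreal r \<le> f (x (enn2real (hit_time f r x)))"
    then have lt: "f (x \<sigma>) < ennreal r" unfolding \<sigma>_def by simp
    have "(x \<longlongrightarrow> x \<sigma>) (at_right \<sigma>)" using rc s0 unfolding continuous_within by auto
    then have "((\<lambda>s. f (x s)) \<longlongrightarrow> f (x \<sigma>)) (at_right \<sigma>)"
      using contf by (intro isCont_tendsto_compose[of _ f]) (auto simp: continuous_on_eq_continuous_at)
    then have "eventually (\<lambda>s. f (x s) < ennreal r) (at_right \<sigma>)" using lt by (rule order_tendstoD)
    then obtain b where b: "b > \<sigma>" "\<forall>s>\<sigma>. s < b \<longrightarrow> f (x s) < ennreal r"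
      unfolding eventually_at_right_field by auto
    have "ennreal b \<le> hit_time f r x"
      unfolding hit_time_def
    proof (rule INF_greatest)
      fix s assume "s \<in> {t. t \<ge> 0 \<and> ennreal r \<le> f (x t)}"
      then have s: "s \<ge> 0" "ennreal r \<le> f (x s)" by auto
      have "hit_time f r x \<le> ennreal s" using hit_le[of s r f x] s by simp
      then have "ennreal \<sigma> \<le> ennreal s" using e unfolding \<sigma>_def by simp
      then have "\<sigma> \<le> s" using s(1) by (simp add: ennreal_le_iff)
      moreover have "s \<noteq> \<sigma>" using s lt by auto
      ultimately have "b \<le> s" using b s by (meson leD leI order_le_neq_trans)
      then show "ennreal b \<le> ennreal s" by (rule ennreal_leI)
    qed
    moreover have "ennreal \<sigma> < ennreal b" using b s0 by (subst ennreal_less_iff) auto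
    then have "hit_time f r x < ennreal b" using e unfolding \<sigma>_def by simp
    ultimately show False by simp
  qed
qed

lemma stopped_GG:
  fixes x :: "real \<Rightarrow> 'e::metric_space"
  assumes rc: "\<forall>s\<ge>0. continuous (at_right s) x" and contf: "continuous_on UNIV f"
    and g: "good \<psi> h T0" and anti: "\<And>a b. a \<le> b \<Longrightarrow> \<psi> b \<le> \<psi> a"
    and h1: "\<And>y. ennreal r \<le> f y \<Longrightarrow> h y = 1"
  shows "GG \<psi> h (stopped f r x) = GG \<psi> h x"
proof (cases "hit_time f r x = \<infinity>")
  case True
  then have "stopped f r x = x" unfolding stopped_def by (auto simp: fun_eq_iff)
  then show ?thesis by simp
next
  case False
  define \<sigma> where "\<sigma> = enn2real (hit_time f r x)"
  have s0: "\<sigma> \<ge> 0" and e: "ennreal \<sigma> = hit_time f r x" and hs: "ennreal r \<le> f (x \<sigma>)"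
    using hit_attained[OF rc contf False] unfolding \<sigma>_def by auto
  have st: "stopped f r x s = x (if \<sigma> < s then \<sigma> else s)" for s
  proof -
    have "(hit_time f r x < ennreal s) = (\<sigma> < s)"
    proof (cases "s \<ge> 0")
      case True
      then show ?thesis using e[symmetric] s0 by (simp add: ennreal_less_iff)
    next
      case False
      then show ?thesis using s0 by (simp add: ennreal_neg)
    qed
    then show ?thesis unfolding stopped_def \<sigma>_def by simp
  qed
  have hb: "0 \<le> h y" "h y \<le> 1" "0 \<le> \<psi> s" for y s using g unfolding good_def by auto
  show ?thesis
  proof (rule antisym)
    show "GG \<psi> h (stopped f r x) \<le> GG \<psi> h x"
    proof (rule GG_le)
      fix s :: real assume s: "s \<ge> 0"
      show "\<psi> s * h (stopped f r x s) \<le> GG \<psi> h x"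
      proof (cases "\<sigma> < s")
        case True
        then have "\<psi> s * h (stopped f r x s) \<le> \<psi> \<sigma> * h (x \<sigma>)" using st anti[of \<sigma> s] hb
          by (simp add: mult_right_mono)
        also have "\<dots> \<le> GG \<psi> h x" by (rule GG_upper[OF g s0])
        finally show ?thesis .
      next
        case False
        then show ?thesis using st GG_upper[OF g s] by simp
      qed
    qed
  next
    show "GG \<psi> h x \<le> GG \<psi> h (stopped f r x)"
    proof (rule GG_le)
      fix s :: real assume s: "s \<ge> 0"
      show "\<psi> s * h (x s) \<le> GG \<psi> h (stopped f r x)"
      proof (cases "\<sigma> < s")
        case True
        have "\<psi> s * h (x s) \<le> \<psi> s" using hb by (simp add: mult_left_le)
        also have "\<dots> \<le> \<psi> \<sigma> * 1" using anti[of \<sigma> s] True by simp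
        also have "\<dots> = \<psi> \<sigma> * h (stopped f r x \<sigma>)" using st[of \<sigma>] h1[OF hs] by simp
        also have "\<dots> \<le> GG \<psi> h (stopped f r x)" by (rule GG_upper[OF g s0])
        finally show ?thesis .
      next
        case False
        then show ?thesis using st[of s] GG_upper[OF g s, of "stopped f r x"] by simp
      qed
    qed
  qed
qed

definition phi :: "('e \<Rightarrow> ennreal) \<Rightarrow> real \<Rightarrow> 'e \<Rightarrow> real" where
  "phi f r y = enn2real (min (f y) (ennreal r))"
definition psiK :: "real \<Rightarrow> real \<Rightarrow> real \<Rightarrow> real" where
  "psiK t e s = min 1 (max 0 (1 - (s - t) / e))"
definition hK :: "('e \<Rightarrow> ennreal) \<Rightarrow> real \<Rightarrow> real \<Rightarrow> 'e \<Rightarrow> real" where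
  "hK f r d y = min 1 (max 0 ((phi f r y - (r - d)) / d))"

lemma min_enn_eq: "r \<ge> 0 \<Longrightarrow> min (f y) (ennreal r) = ennreal (phi f r y)"
  unfolding phi_def
  by (metis ennreal_enn2real ennreal_less_top min.absorb_iff2 min.bounded_iff min_def order.strict_trans1)

lemma phi_cont:
  fixes f :: "'e::topological_space \<Rightarrow> ennreal"
  assumes "continuous_on UNIV f" "r \<ge> 0" shows "continuous_on UNIV (phi f r)"
  unfolding continuous_on_def
proof
  fix y0 :: 'e
  have "((\<lambda>y. min (f y) (ennreal r)) \<longlongrightarrow> min (f y0) (ennreal r)) (at y0 within UNIV)"
    using assms(1) by (intro tendsto_min tendsto_const) (simp add: continuous_on_def)
  then have "((\<lambda>y. min (f y) (ennreal r)) \<longlongrightarrow> ennreal (phi f r y0)) (at y0 within UNIV)"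
    by (simp only: min_enn_eq[OF assms(2), of f y0, symmetric])
  then show "(phi f r \<longlongrightarrow> phi f r y0) (at y0 within UNIV)"
    unfolding phi_def[abs_def] by (intro tendsto_enn2real) (auto simp: phi_def)
qed

lemma phi_ge: "r \<ge> 0 \<Longrightarrow> r \<le> phi f r y \<longleftrightarrow> ennreal r \<le> f y"
  using min_enn_eq[of r f y]
  by (metis ennreal_le_iff min.absorb_iff2 min.cobounded1 min.orderE order_antisym_conv
      min.cobounded2 enn2real_nonneg phi_def)

lemma phi_le: "r \<ge> 0 \<Longrightarrow> phi f r y \<le> r"
  using min_enn_eq[of r f y] by (metis min.cobounded2 ennreal_le_iff enn2real_nonneg phi_def)

lemma psiK_anti: assumes "e > 0" "a \<le> b" shows "psiK t e b \<le> psiK t e a"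
proof -
  have "1 - (b - t)/e \<le> 1 - (a - t)/e" using divide_right_mono[of "a-t" "b-t" e] assms by auto
  then show ?thesis unfolding psiK_def min_def max_def by auto
qed

lemma clip_pos: "0 < min 1 (max 0 z) \<longleftrightarrow> 0 < (z::real)" by auto

lemma psiK_pos: "e > 0 \<Longrightarrow> 0 < psiK t e s \<longleftrightarrow> s < t + e"
  unfolding psiK_def clip_pos by (auto simp: field_simps)

lemma psiK_1: "e > 0 \<Longrightarrow> s \<le> t \<Longrightarrow> psiK t e s = 1"
  unfolding psiK_def by (auto simp: field_simps)

lemma hK_pos: "d > 0 \<Longrightarrow> 0 < hK f r d y \<longleftrightarrow> r - d < phi f r y"
  unfolding hK_def clip_pos by (auto simp: field_simps)

lemma hK_1: "d > 0 \<Longrightarrow> r \<ge> 0 \<Longrightarrow> ennreal r \<le> f y \<Longrightarrow> hK f r d y = 1"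
  using phi_ge[of r f y] phi_le[of r f y] unfolding hK_def by auto

lemma good_K:
  fixes f :: "'e::metric_space \<Rightarrow> ennreal"
  assumes "continuous_on UNIV f" "r \<ge> 0" "t \<ge> 0" "e > 0" "d > 0"
  shows "good (psiK t e) (hK f r d) (t + e)"
  unfolding good_def
proof (intro conjI allI impI)
  show "continuous_on UNIV (psiK t e)" unfolding psiK_def[abs_def]
    by (intro continuous_intros) (use assms in auto)
  show "continuous_on UNIV (hK f r d)" unfolding hK_def[abs_def]
    using phi_cont[OF assms(1,2)] assms by (intro continuous_intros) auto
  fix s :: real assume "t + e \<le> s" then show "psiK t e s = 0" unfolding psiK_def using assms
    by (auto simp: field_simps)
qed (use assms in \<open>auto simp: psiK_def hK_def\<close>)

lemma cont_at_within:
  fixes y :: "real \<Rightarrow> 'e::metric_space"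
  assumes "continuous_on {0..} y" "s \<ge> 0" "e > 0"
  shows "\<exists>d>0. \<forall>u\<ge>0. \<bar>u - s\<bar> < d \<longrightarrow> dist (y u) (y s) < e"
proof -
  have "\<forall>x\<in>{0..}. \<forall>e>0. \<exists>d>0. \<forall>x'\<in>{0..}. dist x' x < d \<longrightarrow> dist (y x') (y x) < e"
    using assms(1) unfolding continuous_on_iff by blast
  then obtain d where "d > 0" "\<forall>x'\<in>{0..}. dist x' s < d \<longrightarrow> dist (y x') (y s) < e"
    using assms(2,3) by force
  then show ?thesis by (intro exI[of _ d]) (auto simp: dist_real_def)
qed

lemma GG_rat:
  assumes g: "good \<psi> h T0" and y: "continuous_on {0..} y"
  shows "GG \<psi> h y = (SUP q\<in>\<rat> \<inter> {0..}. \<psi> q * h (y q))"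
proof (rule antisym)
  have bddQ: "bdd_above ((\<lambda>q. \<psi> q * h (y q)) ` (\<rat> \<inter> {0..}))"
    using g unfolding good_def by (intro bdd_aboveI[of _ 1]) (auto simp: mult_le_one)
  show "GG \<psi> h y \<le> (SUP q\<in>\<rat> \<inter> {0..}. \<psi> q * h (y q))"
  proof (rule GG_le)
    fix s :: real assume s: "s \<ge> 0"
    show "\<psi> s * h (y s) \<le> (SUP q\<in>\<rat> \<inter> {0..}. \<psi> q * h (y q))"
    proof (rule field_le_epsilon)
      fix e :: real assume e: "e > 0"
      obtain \<rho> where \<rho>: "\<rho> > 0" "\<forall>s' y'. \<bar>s' - s\<bar> < \<rho> \<longrightarrow> dist y' (y s) < \<rho> \<longrightarrow> \<bar>\<psi> s' * h y' - \<psi> s * h (y s)\<bar> < e"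
        using F_cont[OF g e] by blast
      obtain d where d: "d > 0" "\<forall>u\<ge>0. \<bar>u - s\<bar> < d \<longrightarrow> dist (y u) (y s) < \<rho>"
        using cont_at_within[OF y s \<rho>(1)] by blast
      obtain q where q: "q \<in> \<rat>" "s < q" "q < s + min \<rho> d"
        using Rats_dense_in_real[of s "s + min \<rho> d"] \<rho>(1) d(1) by auto
      have "\<bar>\<psi> q * h (y q) - \<psi> s * h (y s)\<bar> < e" using q d \<rho> s by auto
      moreover have "\<psi> q * h (y q) \<le> (SUP q\<in>\<rat> \<inter> {0..}. \<psi> q * h (y q))"
        by (rule cSUP_upper[OF _ bddQ]) (use q s in auto)
      ultimately show "\<psi> s * h (y s) \<le> (SUP q\<in>\<rat> \<inter> {0..}. \<psi> q * h (y q)) + e" by linarith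
    qed
  qed
  show "(SUP q\<in>\<rat> \<inter> {0..}. \<psi> q * h (y q)) \<le> GG \<psi> h y"
    unfolding GG_def by (rule cSUP_subset_mono) (use GG_bdd[OF g] in \<open>auto intro: exI[of _ 0]\<close>)
qed

lemma GG_Y_meas:
  fixes Y :: "'b \<Rightarrow> real \<Rightarrow> 'e::metric_space"
  assumes g: "good \<psi> h T0" and measY: "\<And>t. (\<lambda>\<omega>. Y \<omega> t) \<in> measurable N borel"
    and contY: "\<And>\<omega>. \<omega> \<in> space N \<Longrightarrow> continuous_on {0..} (Y \<omega>)"
  shows "(\<lambda>\<omega>. GG \<psi> h (Y \<omega>)) \<in> borel_measurable N"
proof -
  have hm: "h \<in> borel_measurable borel" using g unfolding good_def
    by (intro borel_measurable_continuous_onI) auto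
  have "(\<lambda>\<omega>. SUP q\<in>\<rat> \<inter> {0..}. \<psi> q * h (Y \<omega> q)) \<in> borel_measurable N"
  proof (rule borel_measurable_cSUP)
    show "countable (\<rat> \<inter> {0..})" using countable_rat by auto
    fix q show "(\<lambda>\<omega>. \<psi> q * h (Y \<omega> q)) \<in> borel_measurable N"
      using measurable_compose[OF measY hm] by measurable
  next
    fix \<omega> show "bdd_above ((\<lambda>q. \<psi> q * h (Y \<omega> q)) ` (\<rat> \<inter> {0..}))"
      using g unfolding good_def by (intro bdd_aboveI[of _ 1]) (auto simp: mult_le_one)
  qed
  then show ?thesis
    by (rule measurable_cong[THEN iffD1, rotated]) (simp add: GG_rat[OF g contY])
qed

context
  fixes M :: "nat \<Rightarrow> 'a measure" and X :: "nat \<Rightarrow> 'a \<Rightarrow> real \<Rightarrow> 'e::polish_space"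
    and N :: "'b measure" and Y :: "'b \<Rightarrow> real \<Rightarrow> 'e"
    and f :: "'e \<Rightarrow> ennreal"
  assumes probM: "\<And>n. prob_space (M n)" and probN: "prob_space N"
    and measX: "\<And>n t. (\<lambda>\<omega>. X n \<omega> t) \<in> measurable (M n) borel"
    and measY: "\<And>t. (\<lambda>\<omega>. Y \<omega> t) \<in> measurable N borel"
    and cadX: "\<And>n \<omega>. \<omega> \<in> space (M n) \<Longrightarrow> cadlag (X n \<omega>)"
    and contY: "\<And>\<omega>. \<omega> \<in> space N \<Longrightarrow> continuous_on {0..} (Y \<omega>)"
    and contf: "continuous_on UNIV f"
    and localconv: "\<And>r. r > 0 \<Longrightarrow>
        skorokhod_conv_distr M (\<lambda>n \<omega>. stopped f r (X n \<omega>)) N (\<lambda>\<omega>. stopped f r (Y \<omega>))"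
begin

lemma rcY: "\<omega> \<in> space N \<Longrightarrow> \<forall>s\<ge>0. continuous (at_right s) (Y \<omega>)"
proof safe
  fix s :: real assume "\<omega> \<in> space N" "s \<ge> 0"
  then have "continuous (at s within {0..}) (Y \<omega>)" using contY
    by (simp add: continuous_on_eq_continuous_within)
  then show "continuous (at_right s) (Y \<omega>)" by (rule continuous_within_subset) (use \<open>s \<ge> 0\<close> in auto)
qed

lemma rcX: "\<omega> \<in> space (M n) \<Longrightarrow> \<forall>s\<ge>0. continuous (at_right s) (X n \<omega>)"
  using cadX unfolding cadlag_def by auto

lemma step_k:
  assumes r: "r > 0" and t: "t > 0" and e: "e > 0"
  shows "limsup (\<lambda>n. ereal (measure (M n) {\<omega>\<in>space (M n). hit_time f r (X n \<omega>) \<le> ennreal t}))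
           \<le> ereal (measure N {\<omega>\<in>space N. 0 < GG (psiK t e) (hK f r e) (Y \<omega>)})"
proof -
  define G where "G = GG (psiK t e) (hK f r e)"
  have g: "good (psiK t e) (hK f r e) (t + e)" using good_K[OF contf] r t e by auto
  have G01: "0 \<le> G x" "G x \<le> 1" for x unfolding G_def using GG_nonneg[OF g] GG_le1[OF g] by auto
  have sc: "skorokhod_continuous G" unfolding skorokhod_continuous_def G_def using GG_cont[OF g] by blast
  have sc': "skorokhod_continuous (\<lambda>x. 1 - G x)" using sc unfolding skorokhod_continuous_def
    by (auto intro: tendsto_diff)
  have bd: "bounded (range G)" "bounded (range (\<lambda>x. 1 - G x))"
    unfolding bounded_iff using G01 by (auto intro!: exI[of _ 1])
  have conv1: "(\<lambda>n. \<integral>\<omega>. G (stopped f r (X n \<omega>)) \<partial>M n) \<longlonglongrightarrow> (\<integral>\<omega>. G (stopped f r (Y \<omega>)) \<partial>N)"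
    using localconv[OF r] sc bd unfolding skorokhod_conv_distr_def by blast
  have conv2: "(\<lambda>n. \<integral>\<omega>. 1 - G (stopped f r (X n \<omega>)) \<partial>M n) \<longlonglongrightarrow> (\<integral>\<omega>. 1 - G (stopped f r (Y \<omega>)) \<partial>N)"
    using localconv[OF r] sc' bd unfolding skorokhod_conv_distr_def by blast
  have anti: "\<And>a b. a \<le> b \<Longrightarrow> psiK t e b \<le> psiK t e a" using psiK_anti e by blast
  have h1: "\<And>y. ennreal r \<le> f y \<Longrightarrow> hK f r e y = 1" using hK_1[of e r f] e r by simp
  have stY: "G (stopped f r (Y \<omega>)) = G (Y \<omega>)" if "\<omega> \<in> space N" for \<omega>
    unfolding G_def by (rule stopped_GG[OF rcY[OF that] contf g anti h1])
  have stX: "G (stopped f r (X n \<omega>)) = G (X n \<omega>)" if "\<omega> \<in> space (M n)" for n \<omega>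
    unfolding G_def by (rule stopped_GG[OF rcX[OF that] contf g anti h1])
  interpret N: prob_space N by (rule probN)
  have measGY: "(\<lambda>\<omega>. G (Y \<omega>)) \<in> borel_measurable N"
    unfolding G_def by (rule GG_Y_meas[OF g measY contY])
  have intY: "integrable N (\<lambda>\<omega>. G (Y \<omega>))"
    using G01 by (intro N.integrable_const_bound[where B=1] measGY) auto
  define J where "J = (\<integral>\<omega>. G (Y \<omega>) \<partial>N)"
  define I where "I n = (\<integral>\<omega>. G (X n \<omega>) \<partial>M n)" for n
  define I' where "I' n = (\<integral>\<omega>. 1 - G (X n \<omega>) \<partial>M n)" for n
  have c1: "I \<longlonglongrightarrow> J"
  proof -
    have "(\<integral>\<omega>. G (stopped f r (Y \<omega>)) \<partial>N) = J" unfolding J_def by (rule Bochner_Integration.integral_cong) (auto simp: stY)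
    moreover have "(\<integral>\<omega>. G (stopped f r (X n \<omega>)) \<partial>M n) = I n" for n unfolding I_def by (rule Bochner_Integration.integral_cong) (auto simp: stX)
    ultimately show ?thesis using conv1 by simp
  qed
  have c2: "I' \<longlonglongrightarrow> 1 - J"
  proof -
    have "(\<integral>\<omega>. 1 - G (stopped f r (Y \<omega>)) \<partial>N) = (\<integral>\<omega>. 1 - G (Y \<omega>) \<partial>N)" by (rule Bochner_Integration.integral_cong) (auto simp: stY)
    also have "\<dots> = 1 - J" unfolding J_def using Bochner_Integration.integral_diff[OF N.integrable_const intY, of 1] by (simp add: N.prob_space)
    finally have a: "(\<integral>\<omega>. 1 - G (stopped f r (Y \<omega>)) \<partial>N) = 1 - J" .
    have "(\<integral>\<omega>. 1 - G (stopped f r (X n \<omega>)) \<partial>M n) = I' n" for n unfolding I'_def by (rule Bochner_Integration.integral_cong) (auto simp: stX)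
    then show ?thesis using conv2 a by simp
  qed
  have "(\<lambda>n. I n + I' n) \<longlonglongrightarrow> J + (1 - J)" by (intro tendsto_add c1 c2)
  then have "eventually (\<lambda>n. 1/2 < I n + I' n) sequentially" by (intro order_tendstoD) auto
  then have evint: "eventually (\<lambda>n. integrable (M n) (\<lambda>\<omega>. G (X n \<omega>))) sequentially"
  proof eventually_elim
    case (elim n)
    interpret Mn: prob_space "M n" by (rule probM)
    show ?case
    proof (rule ccontr)
      assume ni: "\<not> integrable (M n) (\<lambda>\<omega>. G (X n \<omega>))"
      have ni': "\<not> integrable (M n) (\<lambda>\<omega>. 1 - G (X n \<omega>))"
      proof
        assume "integrable (M n) (\<lambda>\<omega>. 1 - G (X n \<omega>))"
        then have "integrable (M n) (\<lambda>\<omega>. 1 - (1 - G (X n \<omega>)))" by (rule Bochner_Integration.integrable_diff[OF Mn.integrable_const])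
        then show False using ni by simp
      qed
      have "I n = 0" "I' n = 0" unfolding I_def I'_def using ni ni' not_integrable_integral_eq by blast+
      then show False using elim by simp
    qed
  qed
  have evle: "eventually (\<lambda>n. ereal (measure (M n) {\<omega>\<in>space (M n). hit_time f r (X n \<omega>) \<le> ennreal t}) \<le> ereal (I n)) sequentially"
    using evint
  proof eventually_elim
    case (elim n)
    define A where "A = {\<omega>\<in>space (M n). hit_time f r (X n \<omega>) \<le> ennreal t}"
    have "measure (M n) A \<le> I n"
    proof (cases "A \<in> sets (M n)")
      case False
      then show ?thesis unfolding I_def using G01 by (simp add: measure_notin_sets)
    next
      case True
      interpret Mn: prob_space "M n" by (rule probM)
      have "measure (M n) A = (\<integral>\<omega>. indicator A \<omega> \<partial>M n)"
        using sets.sets_into_space[OF True] by (simp add: Int_absorb2)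
      also have "\<dots> \<le> I n" unfolding I_def
      proof (rule integral_mono[OF _ elim])
        show "integrable (M n) (indicator A :: _ \<Rightarrow> real)" using True
          by (simp add: integrable_indicator_iff Int_absorb2 sets.sets_into_space Mn.emeasure_finite less_top[symmetric])
        fix \<omega> assume \<omega>: "\<omega> \<in> space (M n)"
        show "indicator A \<omega> \<le> G (X n \<omega>)"
        proof (cases "\<omega> \<in> A")
          case True
          then have ht: "hit_time f r (X n \<omega>) \<le> ennreal t" unfolding A_def by auto
          then have fin: "hit_time f r (X n \<omega>) \<noteq> \<infinity>" by (auto simp: top_unique)
          define \<sigma> where "\<sigma> = enn2real (hit_time f r (X n \<omega>))"
          have s: "0 \<le> \<sigma>" "ennreal \<sigma> = hit_time f r (X n \<omega>)" "ennreal r \<le> f (X n \<omega> \<sigma>)"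
            using hit_attained[OF rcX[OF \<omega>] contf fin] unfolding \<sigma>_def by auto
          have "\<sigma> \<le> t" using ht s t by (metis ennreal_le_iff less_imp_le)
          then have "psiK t e \<sigma> * hK f r e (X n \<omega> \<sigma>) = 1" using psiK_1[OF e] h1[OF s(3)] by simp
          then have "1 \<le> G (X n \<omega>)" unfolding G_def using GG_upper[OF g s(1), of "X n \<omega>"] by simp
          then show ?thesis using True by simp
        qed (use G01 in simp)
      qed
      finally show ?thesis .
    qed
    then show ?case unfolding A_def by simp
  qed
  have "limsup (\<lambda>n. ereal (measure (M n) {\<omega>\<in>space (M n). hit_time f r (X n \<omega>) \<le> ennreal t}))
      \<le> limsup (\<lambda>n. ereal (I n))" by (rule Limsup_mono[OF evle])
  also have "\<dots> = ereal J" by (rule lim_imp_Limsup) (use c1 in auto)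
  also have "J \<le> measure N {\<omega>\<in>space N. 0 < G (Y \<omega>)}"
  proof -
    define B where "B = {\<omega>\<in>space N. 0 < G (Y \<omega>)}"
    have B: "B \<in> sets N" unfolding B_def using measGY by measurable
    have "J \<le> (\<integral>\<omega>. indicator B \<omega> \<partial>N)" unfolding J_def
    proof (rule integral_mono[OF intY])
      show "integrable N (indicator B :: _ \<Rightarrow> real)" using B
        by (simp add: integrable_indicator_iff Int_absorb2 sets.sets_into_space N.emeasure_finite less_top[symmetric])
      fix \<omega> assume "\<omega> \<in> space N" then show "G (Y \<omega>) \<le> indicator B \<omega>"
        using G01[of "Y \<omega>"] unfolding B_def by (auto simp: indicator_def)
    qed
    also have "\<dots> = measure N B" using sets.sets_into_space[OF B] by (simp add: Int_absorb2)
    finally show ?thesis unfolding B_def .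
  qed
  finally show ?thesis unfolding G_def by simp
qed


lemma hit_le_t_iff:
  assumes "\<omega> \<in> space N" "t \<ge> 0"
  shows "hit_time f r (Y \<omega>) \<le> ennreal t \<longleftrightarrow> (\<exists>s. 0 \<le> s \<and> s \<le> t \<and> ennreal r \<le> f (Y \<omega> s))"
proof
  assume ht: "hit_time f r (Y \<omega>) \<le> ennreal t"
  then have fin: "hit_time f r (Y \<omega>) \<noteq> \<infinity>" by (auto simp: top_unique)
  define \<sigma> where "\<sigma> = enn2real (hit_time f r (Y \<omega>))"
  have s: "0 \<le> \<sigma>" "ennreal \<sigma> = hit_time f r (Y \<omega>)" "ennreal r \<le> f (Y \<omega> \<sigma>)"
    using hit_attained[OF rcY[OF assms(1)] contf fin] unfolding \<sigma>_def by auto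
  have "\<sigma> \<le> t" using ht s assms(2) by (metis ennreal_le_iff)
  then show "\<exists>s. 0 \<le> s \<and> s \<le> t \<and> ennreal r \<le> f (Y \<omega> s)" using s by blast
next
  assume "\<exists>s. 0 \<le> s \<and> s \<le> t \<and> ennreal r \<le> f (Y \<omega> s)"
  then obtain s where s: "0 \<le> s" "s \<le> t" "ennreal r \<le> f (Y \<omega> s)" by blast
  have "hit_time f r (Y \<omega>) \<le> ennreal s" using hit_le[of s r f "Y \<omega>"] s by simp
  also have "\<dots> \<le> ennreal t" using s by (intro ennreal_leI) 
  finally show "hit_time f r (Y \<omega>) \<le> ennreal t" .
qed

definition Bset :: "real \<Rightarrow> real \<Rightarrow> nat \<Rightarrow> 'b set" where
  "Bset r t k = {\<omega>\<in>space N. 0 < GG (psiK t (1 / Suc k)) (hK f r (1 / Suc k)) (Y \<omega>)}"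

lemma B_char:
  assumes r: "r > 0" and t: "t > 0"
  shows "\<omega> \<in> Bset r t k \<longleftrightarrow> \<omega> \<in> space N \<and> (\<exists>s\<ge>0. s < t + 1 / Suc k \<and> r - 1 / Suc k < phi f r (Y \<omega> s))"
proof -
  have e: "(1 / Suc k :: real) > 0" by simp
  have g: "good (psiK t (1 / Suc k)) (hK f r (1 / Suc k)) (t + 1 / Suc k)" using good_K[OF contf] r t e
    by (meson less_imp_le)
  show ?thesis unfolding Bset_def mem_Collect_eq GG_pos_iff[OF g] psiK_pos[OF e] hK_pos[OF e] by blast
qed

lemma B_sets:
  assumes r: "r > 0" and t: "t > 0"
  shows "Bset r t k \<in> sets N"
proof -
  have e: "(1 / Suc k :: real) > 0" by simp
  have g: "good (psiK t (1 / Suc k)) (hK f r (1 / Suc k)) (t + 1 / Suc k)" using good_K[OF contf] r t e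
    by (meson less_imp_le)
  have "(\<lambda>\<omega>. GG (psiK t (1 / Suc k)) (hK f r (1 / Suc k)) (Y \<omega>)) \<in> borel_measurable N"
    by (rule GG_Y_meas[OF g measY contY])
  then show ?thesis unfolding Bset_def by measurable
qed

lemma B_dec:
  assumes r: "r > 0" and t: "t > 0"
  shows "decseq (Bset r t)"
proof (rule decseq_SucI, rule subsetI)
  fix k \<omega> assume "\<omega> \<in> Bset r t (Suc k)"
  then obtain s where s: "\<omega> \<in> space N" "s \<ge> 0" "s < t + 1 / Suc (Suc k)" "r - 1 / Suc (Suc k) < phi f r (Y \<omega> s)"
    using B_char[OF r t] by blast
  have "1 / Suc (Suc k) \<le> (1 / Suc k :: real)" by (simp add: frac_le)
  then have "s < t + 1 / Suc k" "r - 1 / Suc k < phi f r (Y \<omega> s)" using s(3,4) by linarith+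
  then show "\<omega> \<in> Bset r t k" using s(1,2) B_char[OF r t] by blast
qed

lemma B_Inter:
  assumes r: "r > 0" and t: "t > 0"
  shows "(\<Inter>k. Bset r t k) = {\<omega>\<in>space N. hit_time f r (Y \<omega>) \<le> ennreal t}"
proof (intro set_eqI iffI)
  fix \<omega> assume \<omega>: "\<omega> \<in> {\<omega>\<in>space N. hit_time f r (Y \<omega>) \<le> ennreal t}"
  then obtain s where s: "0 \<le> s" "s \<le> t" "ennreal r \<le> f (Y \<omega> s)" using hit_le_t_iff[of \<omega> t] t by auto
  have "phi f r (Y \<omega> s) = r" using phi_ge[of r f "Y \<omega> s"] phi_le[of r f "Y \<omega> s"] s r by simp
  show "\<omega> \<in> (\<Inter>k. Bset r t k)"
  proof (rule INT_I)
    fix k :: nat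
    have "s < t + 1 / Suc k" "r - 1 / Suc k < phi f r (Y \<omega> s)" using s \<open>phi f r (Y \<omega> s) = r\<close>
      by (auto intro: add_pos_pos le_less_trans)
    then show "\<omega> \<in> Bset r t k" using B_char[OF r t] \<omega> s by blast
  qed
next
  fix \<omega> assume \<omega>: "\<omega> \<in> (\<Inter>k. Bset r t k)"
  then have sp: "\<omega> \<in> space N" using B_char[OF r t] by blast
  show "\<omega> \<in> {\<omega>\<in>space N. hit_time f r (Y \<omega>) \<le> ennreal t}"
  proof (rule ccontr)
    assume "\<omega> \<notin> {\<omega>\<in>space N. hit_time f r (Y \<omega>) \<le> ennreal t}"
    then have no: "\<forall>s. 0 \<le> s \<and> s \<le> t \<longrightarrow> \<not> ennreal r \<le> f (Y \<omega> s)" using hit_le_t_iff[OF sp, of t] sp t by auto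
    define p where "p = (\<lambda>s. phi f r (Y \<omega> s))"
    have pc: "continuous_on {0..} p" unfolding p_def
      by (rule continuous_on_compose2[OF phi_cont[OF contf] contY[OF sp]]) (use r in auto)
    have plt: "p s < r" if "0 \<le> s" "s \<le> t" for s
    proof -
      have "\<not> r \<le> phi f r (Y \<omega> s)" using no that phi_ge[of r f "Y \<omega> s"] r by auto
      then show ?thesis unfolding p_def by simp
    qed
    obtain s0 where s0: "s0 \<in> {0..t}" "\<forall>s\<in>{0..t}. p s \<le> p s0"
      using continuous_attains_sup[of "{0..t}" p, OF compact_Icc _ continuous_on_subset[OF pc]] t by auto
    define m where "m = p s0"
    have m: "m < r" using plt s0 unfolding m_def by auto
    obtain \<rho> where \<rho>: "\<rho> > 0" "\<forall>u\<ge>0. \<bar>u - t\<bar> < \<rho> \<longrightarrow> dist (p u) (p t) < (r - m)/2"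
      using cont_at_within[OF pc, of t "(r - m)/2"] t m by auto
    obtain k where k: "inverse (real (Suc k)) < min \<rho> ((r - m)/2)"
      using reals_Archimedean[of "min \<rho> ((r - m)/2)"] \<rho> m by auto
    have kk: "1 / real (Suc k) < \<rho>" "1 / real (Suc k) < (r - m)/2" using k by (auto simp: inverse_eq_divide)
    have "\<omega> \<in> Bset r t k" using \<omega> by blast
    then obtain s where s: "s \<ge> 0" "s < t + 1 / Suc k" "r - 1 / Suc k < p s"
      using B_char[OF r t] unfolding p_def by blast
    show False
    proof (cases "s \<le> t")
      case True
      then have ps: "p s \<le> m" using s0 s unfolding m_def by auto
      have a1: "r - m < 1 / real (Suc k)" using s(3) ps by linarith
      have a2: "r - m < 0" using a1 kk(2) by (simp add: field_simps)
      then show False using m by linarith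
    next
      case False
      then have "\<bar>s - t\<bar> < \<rho>" using s kk by auto
      then have dd: "dist (p s) (p t) < (r - m)/2" using \<rho> s by auto
      have ptm: "p t \<le> m" using s0 t unfolding m_def by auto
      have "p s - p t \<le> dist (p s) (p t)" by (simp add: dist_real_def)
      then have "p s - p t < (r - m)/2" using dd by (rule le_less_trans)
      then have "2 * (p s - p t) < r - m" "p t \<le> m" using ptm by (simp_all add: field_simps)
      then have "2 * p s < m + r" by argo
      then have "p s < m + (r - m)/2" by (simp add: field_simps)
      then have "r - 1 / real (Suc k) < m + (r - m)/2" using s(3) by linarith
      then show False using kk(2) by (simp add: field_simps)
    qed
  qed
qed

lemma part1:
  assumes r: "r > 0" and t: "t > 0"
  shows "limsup (\<lambda>n. ereal (measure (M n) {\<omega>\<in>space (M n). hit_time f r (X n \<omega>) \<le> ennreal t}))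
           \<le> ereal (measure N {\<omega>\<in>space N. hit_time f r (Y \<omega>) \<le> ennreal t})"
    and "{\<omega>\<in>space N. hit_time f r (Y \<omega>) \<le> ennreal t} \<in> sets N"
proof -
  interpret N: prob_space N by (rule probN)
  have lim: "(\<lambda>k. measure N (Bset r t k)) \<longlonglongrightarrow> measure N (\<Inter>k. Bset r t k)"
    using B_sets[OF r t] B_dec[OF r t] by (intro N.finite_Lim_measure_decseq) auto
  have "\<forall>k. limsup (\<lambda>n. ereal (measure (M n) {\<omega>\<in>space (M n). hit_time f r (X n \<omega>) \<le> ennreal t}))
           \<le> ereal (measure N (Bset r t k))"
    unfolding Bset_def using step_k[OF r t] by simp
  then show "limsup (\<lambda>n. ereal (measure (M n) {\<omega>\<in>space (M n). hit_time f r (X n \<omega>) \<le> ennreal t}))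
           \<le> ereal (measure N {\<omega>\<in>space N. hit_time f r (Y \<omega>) \<le> ennreal t})"
    using LIMSEQ_le_const[OF lim[THEN tendsto_ereal]] B_Inter[OF r t] by auto
  have "(\<Inter>k. Bset r t k) \<in> sets N" using B_sets[OF r t] by auto
  then show "{\<omega>\<in>space N. hit_time f r (Y \<omega>) \<le> ennreal t} \<in> sets N" using B_Inter[OF r t] by simp
qed


lemma hit_mono: "r \<le> r' \<Longrightarrow> hit_time f r x \<le> hit_time f r' x"
  unfolding hit_time_def by (rule INF_superset_mono) (auto intro: order_trans[OF ennreal_leI])

lemma part2:
  assumes t: "t > 0"
    and noexpl: "AE \<omega> in N. ((\<lambda>r. hit_time f r (Y \<omega>)) \<longlongrightarrow> \<infinity>) at_top"
  shows "((\<lambda>r. limsup (\<lambda>n. ereal (measure (M n)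
                   {\<omega>\<in>space (M n). hit_time f r (X n \<omega>) \<le> ennreal t}))) \<longlongrightarrow> 0) at_top"
proof -
  interpret N: prob_space N by (rule probN)
  define LS where "LS r = limsup (\<lambda>n. ereal (measure (M n) {\<omega>\<in>space (M n). hit_time f r (X n \<omega>) \<le> ennreal t}))" for r
  define P where "P r = measure N {\<omega>\<in>space N. hit_time f r (Y \<omega>) \<le> ennreal t}" for r
  define B where "B m = {\<omega>\<in>space N. hit_time f (real (Suc m)) (Y \<omega>) \<le> ennreal t}" for m
  have Bs: "B m \<in> sets N" for m unfolding B_def by (rule part1(2)) (use t in auto)
  have Bdec: "decseq B"
  proof (rule decseq_SucI)
    fix m show "B (Suc m) \<subseteq> B m" unfolding B_def using hit_mono[of "real (Suc m)" "real (Suc (Suc m))"]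
      by (auto intro: order_trans)
  qed
  obtain N0 where N0: "{\<omega>\<in>space N. \<not> ((\<lambda>r. hit_time f r (Y \<omega>)) \<longlongrightarrow> \<infinity>) at_top} \<subseteq> N0" "N0 \<in> sets N" "emeasure N N0 = 0"
    using noexpl by (auto elim!: AE_E)
  have sub: "(\<Inter>m. B m) \<subseteq> N0"
  proof
    fix \<omega> assume \<omega>: "\<omega> \<in> (\<Inter>m. B m)"
    then have sp: "\<omega> \<in> space N" unfolding B_def by auto
    have "\<not> ((\<lambda>r. hit_time f r (Y \<omega>)) \<longlongrightarrow> \<infinity>) at_top"
    proof
      assume "((\<lambda>r. hit_time f r (Y \<omega>)) \<longlongrightarrow> \<infinity>) at_top"
      then have "eventually (\<lambda>r. ennreal t < hit_time f r (Y \<omega>)) at_top"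
        by (rule order_tendstoD) simp
      then obtain R where R: "\<And>r. r \<ge> R \<Longrightarrow> ennreal t < hit_time f r (Y \<omega>)"
        unfolding eventually_at_top_linorder by blast
      have "R \<le> real (Suc (nat \<lceil>R\<rceil>))" by linarith
      then have "ennreal t < hit_time f (real (Suc (nat \<lceil>R\<rceil>))) (Y \<omega>)" by (rule R)
      moreover have "\<omega> \<in> B (nat \<lceil>R\<rceil>)" using \<omega> by blast
      ultimately show False unfolding B_def by auto
    qed
    then show "\<omega> \<in> N0" using N0(1) sp by blast
  qed
  have "emeasure N (\<Inter>m. B m) \<le> emeasure N N0" using sub N0(2) by (rule emeasure_mono)
  then have "emeasure N (\<Inter>m. B m) = 0" using N0(3) by simp
  then have m0: "measure N (\<Inter>m. B m) = 0" by (simp add: measure_def)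
  have lim: "(\<lambda>m. measure N (B m)) \<longlonglongrightarrow> 0"
    using N.finite_Lim_measure_decseq[of B] Bs Bdec m0 by auto
  have LSle: "LS r \<le> ereal (P r)" if "r > 0" for r unfolding LS_def P_def by (rule part1(1)[OF that t])
  have LS0: "0 \<le> LS r" for r unfolding LS_def by (rule le_Limsup) auto
  have PB: "P r \<le> measure N (B m)" if "r \<ge> real (Suc m)" for r m
  proof -
    have "{\<omega>\<in>space N. hit_time f r (Y \<omega>) \<le> ennreal t} \<subseteq> B m"
      using hit_mono[OF that] unfolding B_def by (auto intro: order_trans)
    then show ?thesis unfolding P_def by (rule N.finite_measure_mono[OF _ Bs])
  qed
  show ?thesis unfolding LS_def[symmetric]
  proof (rule order_tendstoI)
    fix a :: ereal assume "a < 0"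
    then show "eventually (\<lambda>r. a < LS r) at_top" using LS0 by (intro always_eventually allI) (rule less_le_trans)
  next
    fix a :: ereal assume a: "0 < a"
    have t0: "(\<lambda>m. ereal (measure N (B m))) \<longlonglongrightarrow> 0" using tendsto_ereal[OF lim] by (simp add: zero_ereal_def)
    have "eventually (\<lambda>m. ereal (measure N (B m)) < a) sequentially" using order_tendstoD(2)[OF t0 a] .
    then obtain m where m: "ereal (measure N (B m)) < a" by (auto simp: eventually_sequentially)
    show "eventually (\<lambda>r. LS r < a) at_top"
      unfolding eventually_at_top_linorder
    proof (intro exI[of _ "real (Suc m)"] allI impI)
      fix r assume r: "real (Suc m) \<le> r"
      then have "r > 0" by (meson less_le_trans of_nat_0_less_iff zero_less_Suc)
      then have "LS r \<le> ereal (P r)" by (rule LSle)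
      also have "\<dots> \<le> ereal (measure N (B m))" using PB[OF r] by simp
      also have "\<dots> < a" by (rule m)
      finally show "LS r < a" .
    qed
  qed
qed

end


theorem mainTheorem2:
  fixes M :: "nat \<Rightarrow> 'a measure" and X :: "nat \<Rightarrow> 'a \<Rightarrow> real \<Rightarrow> 'e::polish_space"
    and N :: "'b measure" and Y :: "'b \<Rightarrow> real \<Rightarrow> 'e"
    and f :: "'e \<Rightarrow> ennreal"
  assumes probM: "\<And>n. prob_space (M n)" and probN: "prob_space N"
    and measX: "\<And>n t. (\<lambda>\<omega>. X n \<omega> t) \<in> measurable (M n) borel"
    and measY: "\<And>t. (\<lambda>\<omega>. Y \<omega> t) \<in> measurable N borel"
    and cadX: "\<And>n \<omega>. \<omega> \<in> space (M n) \<Longrightarrow> cadlag (X n \<omega>)"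
    and contY: "\<And>\<omega>. \<omega> \<in> space N \<Longrightarrow> continuous_on {0..} (Y \<omega>)"
    and contf: "continuous_on UNIV f"
    and localconv: "\<And>r. r > 0 \<Longrightarrow>
        skorokhod_conv_distr M (\<lambda>n \<omega>. stopped f r (X n \<omega>)) N (\<lambda>\<omega>. stopped f r (Y \<omega>))"
    and noexpl: "AE \<omega> in N. ((\<lambda>r. hit_time f r (Y \<omega>)) \<longlongrightarrow> \<infinity>) at_top"
  shows "(\<forall>r>0. \<forall>t>0.
            limsup (\<lambda>n. ereal (measure (M n) {\<omega>\<in>space (M n). hit_time f r (X n \<omega>) \<le> ennreal t}))
              \<le> ereal (measure N {\<omega>\<in>space N. hit_time f r (Y \<omega>) \<le> ennreal t}))
       \<and> (\<forall>t>0. ((\<lambda>r. limsup (\<lambda>n. ereal (measure (M n)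
                   {\<omega>\<in>space (M n). hit_time f r (X n \<omega>) \<le> ennreal t}))) \<longlongrightarrow> 0) at_top)"
  using part1(1)[OF probM probN measX measY cadX contY contf localconv]
    part2[OF probM probN measX measY cadX contY contf localconv _ noexpl]
  by blast

end
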